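(* Let $1<p<\infty$ and $W:\mathbb{M}^{3\times3}\to[0,+\infty]$ satisfy (H1)–(H5) below. Let $E\subset\mathbb{R}^2$ be open and bounded, $\eta>0$, and $G\in C(\overline E,\mathbb{M}^{3\times2})$ with $|G^1(x)\wedge G^2(x)|\geq\eta$ for every $x\in\overline E$. Let $\varepsilon\in(0,1/2)$, let $\mathcal{T}$ be a finite triangulation of $E$ and let $\Psi:E\to\mathbb{M}^{2\times2}$ be piecewise constant on the triangulation with $\|\det\Psi-1\|_{L^\infty}\leq\varepsilon$. Then there exist $\varphi\in C^\infty(\overline E,\mathbb{R}^3)$ and $\beta=\beta(\eta,\|G\|_{L^\infty},\|\Psi\|_{L^\infty})>0$ such that $\|\varphi\|_{L^\infty(E)}\leq\beta$, $$\det(G(x)\Psi(x)|\varphi(x))\geq\tfrac1\beta,$$ and $$\int_E W(G(x)\Psi(x)|\varphi(x))\,dx\leq\int_E W_0(G(x)\Psi(x))\,dx+\varepsilon.$$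
   Context: Hypotheses: (H1) $W$ continuous as a $[0,+\infty]$-valued function; (H2) $W(RF)=W(F)$ for $R\in SO(3)$; (H3) $W(F)<\infty$ if $\det F>0$ and $W(F)=+\infty$ if $\det F\leq0$; (H4) $W(F)\geq C_1|F|^p-1/C_1$; (H5) for each $\delta>0$, $W(F)\leq c_\delta(1+|F|^p)$ when $\det F\geq\delta$. $W_0(A):=\inf_{\xi\in\mathbb{R}^3}W(A|\xi)$, where $(A|\xi)$ is the $3\times3$ matrix with columns $A^1,A^2,\xi$; $\wedge$ is the vector product. *)

theory Defs
  imports "HOL-Analysis.Analysis"
begin

definition augm :: "real^2^3 \<Rightarrow> real^3 \<Rightarrow> real^3^3" where
  "augm A \<xi> = (\<chi> i j. if j = 1 then A $ i $ 1 else if j = 2 then A $ i $ 2 else \<xi> $ i)"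

definition W0 :: "(real^3^3 \<Rightarrow> ennreal) \<Rightarrow> real^2^3 \<Rightarrow> ennreal" where
  "W0 W A = (INF \<xi>. W (augm A \<xi>))"

text \<open>Hypotheses (H1)-(H5) on W (with exponent p).\<close>
definition hyps_W :: "real \<Rightarrow> (real^3^3 \<Rightarrow> ennreal) \<Rightarrow> bool" where
  "hyps_W p W \<longleftrightarrow>
     continuous_on UNIV W \<and>
     (\<forall>R F. orthogonal_matrix R \<and> det R = 1 \<longrightarrow> W (R ** F) = W F) \<and>
     (\<forall>F. det F > 0 \<longrightarrow> W F < \<infinity>) \<and>
     (\<forall>F. det F \<le> 0 \<longrightarrow> W F = \<infinity>) \<and>
     (\<exists>C1>0. \<forall>F. W F \<ge> ennreal (C1 * norm F powr p - 1 / C1)) \<and>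
     (\<forall>\<delta>>0. \<exists>c. \<forall>F. det F \<ge> \<delta> \<longrightarrow> W F \<le> ennreal (c * (1 + norm F powr p)))"

definition triangle :: "(real^2) set \<Rightarrow> bool" where
  "triangle K \<longleftrightarrow> (\<exists>a b c. \<not> collinear {a, b, c} \<and> K = convex hull {a, b, c})"

definition triangulation :: "(real^2) set set \<Rightarrow> (real^2) set \<Rightarrow> bool" where
  "triangulation T E \<longleftrightarrow> finite T \<and> (\<forall>K\<in>T. triangle K) \<and>
     (\<forall>K\<in>T. \<forall>K'\<in>T. K \<noteq> K' \<longrightarrow> interior K \<inter> interior K' = {}) \<and>
     \<Union>T = closure E"

text \<open>Psi is piecewise constant on T: there is a value per triangle, and at every point of E
  Psi takes the value of some triangle containing that point (on interiors it is forced).\<close>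
definition pw_const :: "(real^2) set set \<Rightarrow> (real^2) set \<Rightarrow> (real^2 \<Rightarrow> 'b) \<Rightarrow> bool" where
  "pw_const T E \<Psi> \<longleftrightarrow> (\<exists>c. \<forall>x\<in>E. \<exists>K\<in>T. x \<in> K \<and> \<Psi> x = c K)"

text \<open>C-infinity maps on the whole space (all iterated Frechet derivatives exist).\<close>
definition C_inf :: "('a::real_normed_vector \<Rightarrow> 'b::real_normed_vector) \<Rightarrow> bool" where
  "C_inf f \<longleftrightarrow> (\<exists>S. f \<in> S \<and> (\<forall>g\<in>S. \<exists>Dg. (\<forall>x. (g has_derivative Dg x) (at x)) \<and>
                                      (\<forall>v. (\<lambda>x. Dg x v) \<in> S)))"

end

theory Submission
  imports Defs
begin



lemma augm_simps: "augm A \<xi> $ i $ 1 = A $ i $ 1" "augm A \<xi> $ i $ 2 = A $ i $ 2" "augm A \<xi> $ i $ 3 = \<xi> $ i"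
  by (simp_all add: augm_def)

lemma det_augm: "det (augm A \<xi>) = cross3 (column 1 A) (column 2 A) \<bullet> \<xi>"
  by (simp add: augm_def det_3 cross3_def column_def inner_vec_def sum_3 algebra_simps)

lemma cross_mult: "cross3 (column 1 (G ** M)) (column 2 (G ** M)) = det (M::real^2^2) *\<^sub>R cross3 (column 1 (G::real^2^3)) (column 2 G)"
  by (simp add: cross3_def column_def matrix_matrix_mult_def sum_2 det_2 vec_eq_iff forall_3 vector_3 algebra_simps)

lemma det_augm_mult: "det (augm (G ** M) \<xi>) = det (M::real^2^2) * det (augm (G::real^2^3) \<xi>)"
  by (simp add: det_augm cross_mult)

lemma augm_diff: "augm A \<xi> - augm B \<zeta> = augm (A - B) (\<xi> - \<zeta>)"
  by (simp add: augm_def vec_eq_iff)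

lemma nsq33: "(norm (F::real^3^3))\<^sup>2 = (F$1$1)\<^sup>2 + (F$1$2)\<^sup>2 + (F$1$3)\<^sup>2 + (F$2$1)\<^sup>2 + (F$2$2)\<^sup>2 + (F$2$3)\<^sup>2 + (F$3$1)\<^sup>2 + (F$3$2)\<^sup>2 + (F$3$3)\<^sup>2"
  by (simp only: power2_norm_eq_inner) (simp add: inner_vec_def sum_3 power2_eq_square)
lemma nsq23: "(norm (F::real^2^3))\<^sup>2 = (F$1$1)\<^sup>2 + (F$1$2)\<^sup>2 + (F$2$1)\<^sup>2 + (F$2$2)\<^sup>2 + (F$3$1)\<^sup>2 + (F$3$2)\<^sup>2"
  by (simp only: power2_norm_eq_inner) (simp add: inner_vec_def sum_3 sum_2 power2_eq_square)
lemma nsq3: "(norm (F::real^3))\<^sup>2 = (F$1)\<^sup>2 + (F$2)\<^sup>2 + (F$3)\<^sup>2"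
  by (simp only: power2_norm_eq_inner) (simp add: inner_vec_def sum_3 power2_eq_square)


lemma norm_augm_ge: "norm \<xi> \<le> norm (augm A \<xi>)"
  apply (rule power2_le_imp_le) unfolding nsq33 nsq3 augm_simps by simp_all

lemma norm_augm_le: "norm (augm A \<xi>) \<le> norm A + norm \<xi>"
proof -
  have "augm A \<xi> = augm A 0 + augm 0 \<xi>" by (simp add: augm_def vec_eq_iff)
  moreover have "norm (augm A 0) \<le> norm A"
    apply (rule power2_le_imp_le) unfolding nsq33 nsq23 augm_simps by simp_all
  moreover have "norm (augm 0 \<xi>) \<le> norm \<xi>"
    apply (rule power2_le_imp_le) unfolding nsq33 nsq3 augm_simps by simp_all
  ultimately show ?thesis using norm_triangle_ineq[of "augm A 0" "augm 0 \<xi>"] by (simp only:)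
qed

lemma norm_matmul: "norm ((G::real^2^3) ** (M::real^2^2)) \<le> 12 * (norm G * norm M)"
proof -
  define c where "c = norm G * norm M"
  have e: "\<bar>(G ** M)$i$j\<bar> \<le> 2 * c" for i j
  proof -
    have "\<bar>(G ** M)$i$j\<bar> = \<bar>G$i$1 * M$1$j + G$i$2 * M$2$j\<bar>"
      by (simp add: matrix_matrix_mult_def sum_2)
    also have "\<dots> \<le> \<bar>G$i$1\<bar> * \<bar>M$1$j\<bar> + \<bar>G$i$2\<bar> * \<bar>M$2$j\<bar>"
      using abs_triangle_ineq[of "G$i$1 * M$1$j" "G$i$2 * M$2$j"] by (simp add: abs_mult)
    also have "\<dots> \<le> c + c"
    proof -
      have g: "\<bar>G$i$k\<bar> \<le> norm G" for k
        using component_le_norm_cart[of "G$i" k] Finite_Cartesian_Product.norm_nth_le[of G i] by simp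
      have m: "\<bar>M$k$j\<bar> \<le> norm M" for k
        using component_le_norm_cart[of "M$k" j] Finite_Cartesian_Product.norm_nth_le[of M k] by simp
      have "\<bar>G$i$k\<bar> * \<bar>M$k$j\<bar> \<le> c" for k
        unfolding c_def by (rule mult_mono[OF g m]) auto
      from add_mono[OF this this] show ?thesis .
    qed
    finally show ?thesis by simp
  qed
  have "norm (G ** M) \<le> (\<Sum>i\<in>UNIV. norm ((G ** M)$i))" unfolding norm_vec_def by (rule L2_set_le_sum) simp
  also have "\<dots> \<le> (\<Sum>i\<in>(UNIV::3 set). 4 * c)"
  proof (rule sum_mono)
    fix i
    have "norm ((G ** M)$i) \<le> (\<Sum>j\<in>UNIV. norm ((G ** M)$i$j))" unfolding norm_vec_def by (rule L2_set_le_sum) simp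
    also have "\<dots> \<le> (\<Sum>j\<in>(UNIV::2 set). 2 * c)"
      by (rule sum_mono) (simp add: e)
    finally show "norm ((G ** M)$i) \<le> 4 * c" by (simp add: sum_2)
  qed
  also have "\<dots> = 12 * c" by (simp add: sum_3)
  finally show ?thesis unfolding c_def .
qed



lemma real_poly_deriv:
  assumes "real_polynomial_function p"
  shows "\<exists>Dp. (\<forall>x. (p has_derivative Dp x) (at x)) \<and> (\<forall>v. real_polynomial_function (\<lambda>x. Dp x v))"
  using assms
proof (induct p)
  case (linear f)
  then show ?case
    by (rule_tac x="\<lambda>x. f" in exI) (auto intro: bounded_linear_imp_has_derivative)
next
  case (const c)
  show ?case by (rule_tac x="\<lambda>x v. 0" in exI) auto
next
  case (add f1 f2)
  then obtain D1 D2 where "\<And>x. (f1 has_derivative D1 x) (at x)" "\<And>v. real_polynomial_function (\<lambda>x. D1 x v)"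
    "\<And>x. (f2 has_derivative D2 x) (at x)" "\<And>v. real_polynomial_function (\<lambda>x. D2 x v)" by metis
  then show ?case
    by (rule_tac x="\<lambda>x v. D1 x v + D2 x v" in exI) (auto intro!: has_derivative_add)
next
  case (mult f1 f2)
  then obtain D1 D2 where "\<And>x. (f1 has_derivative D1 x) (at x)" "\<And>v. real_polynomial_function (\<lambda>x. D1 x v)"
    "\<And>x. (f2 has_derivative D2 x) (at x)" "\<And>v. real_polynomial_function (\<lambda>x. D2 x v)" by metis
  note D = this
  show ?case
  proof (rule exI[of _ "\<lambda>x v. f1 x * D2 x v + D1 x v * f2 x"], intro conjI allI)
    fix x show "((\<lambda>x. f1 x * f2 x) has_derivative (\<lambda>v. f1 x * D2 x v + D1 x v * f2 x)) (at x)"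
      by (rule has_derivative_mult) (use D in auto)
  next
    fix v show "real_polynomial_function (\<lambda>x. f1 x * D2 x v + D1 x v * f2 x)"
      using D mult by (intro real_polynomial_function.intros(3) real_polynomial_function.intros(4)) auto
  qed
qed

lemma poly_deriv:
  fixes p :: "'a::real_normed_vector \<Rightarrow> 'b::euclidean_space"
  assumes "polynomial_function p"
  shows "\<exists>Dp. (\<forall>x. (p has_derivative Dp x) (at x)) \<and> (\<forall>v. polynomial_function (\<lambda>x. Dp x v))"
proof -
  have "\<forall>b\<in>Basis. \<exists>D. (\<forall>x. ((\<lambda>x. p x \<bullet> b) has_derivative D x) (at x)) \<and> (\<forall>v. real_polynomial_function (\<lambda>x. D x v))"
    using assms real_poly_deriv unfolding polynomial_function_iff_Basis_inner by blast
  then obtain D where D: "\<And>b x. b \<in> Basis \<Longrightarrow> ((\<lambda>x. p x \<bullet> b) has_derivative D b x) (at x)"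
    "\<And>b v. b \<in> Basis \<Longrightarrow> real_polynomial_function (\<lambda>x. D b x v)" by metis
  show ?thesis
  proof (intro exI conjI allI)
    fix x
    have "((\<lambda>x. \<Sum>b\<in>Basis. (p x \<bullet> b) *\<^sub>R b) has_derivative (\<lambda>v. \<Sum>b\<in>Basis. D b x v *\<^sub>R b)) (at x)"
      by (intro has_derivative_sum has_derivative_scaleR_left D)
    then show "(p has_derivative (\<lambda>v. \<Sum>b\<in>Basis. D b x v *\<^sub>R b)) (at x)"
      by (simp add: euclidean_representation)
  next
    fix v
    show "polynomial_function (\<lambda>x. \<Sum>b\<in>Basis. D b x v *\<^sub>R b)"
      apply (rule polynomial_function_sum, simp)
      apply (rule polynomial_function_mult)
      using D(2) by (auto simp: real_polynomial_function_eq)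
  qed
qed

lemma poly_C_inf:
  fixes p :: "'a::real_normed_vector \<Rightarrow> 'b::euclidean_space"
  assumes "polynomial_function p"
  shows "C_inf p"
  unfolding C_inf_def
  apply (rule exI[of _ "{g. polynomial_function g}"])
  using assms poly_deriv by auto



lemma triangle_props:
  assumes "triangle K"
  shows "compact K" "convex K" "interior K \<noteq> {}"
proof -
  obtain a b c where nc: "\<not> collinear {a, b, c}" and K: "K = convex hull {a, b, c}"
    using assms unfolding triangle_def by blast
  show "compact K" unfolding K by (simp add: finite_imp_compact_convex_hull)
  show "convex K" unfolding K by (simp add: convex_convex_hull)
  have "aff_dim K = aff_dim {a,b,c}" unfolding K by (rule aff_dim_convex_hull)
  moreover have "aff_dim {a,b,c} > 1" using nc collinear_aff_dim by force
  moreover have "aff_dim K \<le> int DIM(real^2)" by (rule aff_dim_le_DIM)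
  ultimately have ad: "aff_dim K = int DIM(real^2)" by simp
  then have "rel_interior K = interior K" by (rule interior_rel_interior)
  moreover have "rel_interior K \<noteq> {}"
    using rel_interior_eq_empty[of K] \<open>convex K\<close> K by auto
  ultimately show "interior K \<noteq> {}" by simp
qed

lemma tri_meet:
  assumes "triangle K" "triangle K'" "x \<in> interior K" "x \<in> K'"
  shows "interior K \<inter> interior K' \<noteq> {}"
proof -
  have "closure (interior K') = closure K'"
    using triangle_props[OF assms(2)] by (simp add: convex_closure_interior)
  also have "\<dots> = K'" using triangle_props(1)[OF assms(2)] by (simp add: compact_imp_closed)
  finally have "x \<in> closure (interior K')" using assms(4) by simp
  then have "interior K \<inter> closure (interior K') \<noteq> {}" using assms(3) by blast
  then show ?thesis using open_Int_closure_eq_empty[of "interior K" "interior K'"] by simp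
qed

lemma Psi_on_int:
  assumes "triangulation T E" "\<forall>x\<in>E. \<exists>K\<in>T. x \<in> K \<and> \<Psi> x = c K"
    "K \<in> T" "x \<in> E" "x \<in> interior K"
  shows "\<Psi> x = c K"
proof -
  obtain K' where K': "K' \<in> T" "x \<in> K'" "\<Psi> x = c K'" using assms(2,4) by blast
  have "triangle K" "triangle K'" using assms(1,3) K'(1) unfolding triangulation_def by auto
  then have "interior K \<inter> interior K' \<noteq> {}"
    using tri_meet[of K K' x] assms K' by blast
  then have "K = K'" using assms(1,3) K'(1) unfolding triangulation_def by blast
  then show ?thesis using K' by simp
qed

lemma bad_infdist:
  assumes "triangulation T E" "x \<in> E" "\<not> (\<exists>K\<in>T. ball x r \<subseteq> K)"
  shows "infdist x (\<Union>K\<in>T. frontier K) \<le> r"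
proof (rule ccontr)
  assume "\<not> ?thesis"
  then have far: "infdist x (\<Union>K\<in>T. frontier K) > r" by simp
  have "x \<in> closure E" using assms(2) closure_subset by blast
  then obtain K where K: "K \<in> T" "x \<in> K" using assms(1) unfolding triangulation_def by blast
  have "r > 0" using far infdist_nonneg  assms(3) K by (metis ball_empty empty_subsetI not_le)
  have "ball x r \<inter> frontier K = {}"
  proof (rule ccontr)
    assume "ball x r \<inter> frontier K \<noteq> {}"
    then obtain y where y: "y \<in> ball x r" "y \<in> frontier K" by blast
    then have "infdist x (\<Union>K\<in>T. frontier K) \<le> dist x y" using K(1) by (intro infdist_le) blast
    with y far show False by (simp add: dist_commute)
  qed
  moreover have "ball x r \<inter> K \<noteq> {}" using K \<open>r > 0\<close> centre_in_ball by blast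
  ultimately have "ball x r - K = {}" using connected_Int_frontier[of "ball x r" K] by auto
  then show False using assms(3) K by blast
qed

lemma small_measure_decseq:
  fixes A :: "nat \<Rightarrow> ('a::euclidean_space) set"
  assumes "\<And>n. A n \<in> sets lebesgue" "decseq A" "bounded (A 0)" "negligible N" "(\<Inter>n. A n) \<subseteq> N" "e > 0"
  shows "\<exists>n. measure lebesgue (A n) < e"
proof -
  have fin: "emeasure lebesgue (A n) \<noteq> \<infinity>" for n
  proof -
    have "A n \<subseteq> A 0" using assms(2) by (simp add: decseq_def)
    then have "bounded (A n)" using assms(3) bounded_subset by blast
    then have "A n \<in> lmeasurable" using assms(1) bounded_set_imp_lmeasurable by blast
    then have "emeasure lebesgue (A n) < \<infinity>" unfolding fmeasurable_def by blast
    then show ?thesis using less_imp_neq by blast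
  qed
  have "(\<lambda>n. measure lebesgue (A n)) \<longlonglongrightarrow> measure lebesgue (\<Inter>n. A n)"
    using assms(1,2) fin by (intro Lim_measure_decseq) auto
  moreover have "(\<Inter>n. A n) \<in> null_sets lebesgue"
  proof (rule null_sets_subset)
    show "N \<in> null_sets lebesgue" using assms(4) negligible_iff_null_sets by blast
    show "(\<Inter>n. A n) \<in> sets lebesgue" using assms(1) by auto
  qed (use assms(5) in auto)
  then have "measure lebesgue (\<Inter>n. A n) = 0" by (rule measure_eq_0_null_sets)
  ultimately have lim: "(\<lambda>n. measure lebesgue (A n)) \<longlonglongrightarrow> 0" by simp
  have "eventually (\<lambda>n. measure lebesgue (A n) < e) sequentially"
    using order_tendstoD(2)[OF lim assms(6)] .
  then obtain N where "\<forall>n\<ge>N. measure lebesgue (A n) < e" unfolding eventually_sequentially by blast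
  then show ?thesis by blast
qed

lemma continuous_on_det3: "continuous_on S (\<lambda>F::real^3^3. det F)"
proof -
  have "(\<lambda>F::real^3^3. det F) = (\<lambda>F. F$1$1 * F$2$2 * F$3$3 + F$1$2 * F$2$3 * F$3$1 + F$1$3 * F$2$1 * F$3$2 -
     F$1$1 * F$2$3 * F$3$2 - F$1$2 * F$2$1 * F$3$3 - F$1$3 * F$2$2 * F$3$1)"
    by (rule ext) (simp add: det_3)
  then show ?thesis by (simp del: det_3) (intro continuous_intros)
qed

lemma hyps_W_D:
  assumes "hyps_W p W"
  shows "continuous_on UNIV W" "\<And>F. det F > 0 \<Longrightarrow> W F < \<infinity>" "\<And>F. det F \<le> 0 \<Longrightarrow> W F = \<infinity>"
    "\<exists>C1>0. \<forall>F. W F \<ge> ennreal (C1 * norm F powr p - 1 / C1)"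
    "\<And>\<delta>. \<delta> > 0 \<Longrightarrow> \<exists>c. \<forall>F. det F \<ge> \<delta> \<longrightarrow> W F \<le> ennreal (c * (1 + norm F powr p))"
  using assms unfolding hyps_W_def by blast+

lemma W_upper:
  assumes "hyps_W p W" "p > 0" "d > 0"
  shows "\<exists>M>0. \<forall>F. det F \<ge> d \<and> norm F \<le> r \<longrightarrow> W F \<le> ennreal M"
proof -
  obtain c where c: "\<And>F. det F \<ge> d \<Longrightarrow> W F \<le> ennreal (c * (1 + norm F powr p))"
    using hyps_W_D(5)[OF assms(1,3)] by blast
  define M where "M = \<bar>c\<bar> * (1 + \<bar>r\<bar> powr p) + 1"
  have "M > 0" unfolding M_def by (simp add: add_nonneg_pos)
  moreover have "W F \<le> ennreal M" if "det F \<ge> d" "norm F \<le> r" for F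
  proof -
    have "norm F powr p \<le> \<bar>r\<bar> powr p" using that(2) assms(2) by (intro powr_mono2) auto
    then have "c * (1 + norm F powr p) \<le> \<bar>c\<bar> * (1 + \<bar>r\<bar> powr p)"
      by (smt (verit) abs_ge_self mult_mono powr_ge_zero abs_ge_zero)
    then have "c * (1 + norm F powr p) \<le> M" unfolding M_def by simp
    then show ?thesis using c[OF that(1)] order_trans ennreal_leI by blast
  qed
  ultimately show ?thesis by blast
qed

lemma W_consts:
  assumes hW: "hyps_W p W" and p: "1 < p" and eta: "\<eta> > 0" and a: "a \<ge> 0"
  shows "\<exists>M0 R \<delta>. M0 > 0 \<and> R > 0 \<and> \<delta> > 0 \<and>
    (\<forall>A. norm A \<le> a \<and> norm (cross3 (column 1 A) (column 2 A)) \<ge> \<eta> \<longrightarrow> W0 W A \<le> ennreal M0) \<and>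
    (\<forall>A \<xi>. W (augm A \<xi>) \<le> ennreal (M0+1) \<longrightarrow> norm \<xi> \<le> R) \<and>
    (\<forall>F. norm F \<le> a + R \<and> W F \<le> ennreal (M0+1) \<longrightarrow> det F \<ge> \<delta>)"
proof -
  obtain M0 where M0: "M0 > 0" "\<And>F. det F \<ge> \<eta> \<Longrightarrow> norm F \<le> a + 1 \<Longrightarrow> W F \<le> ennreal M0"
    using W_upper[OF hW _ eta, of "a+1"] p by auto
  have i: "W0 W A \<le> ennreal M0" if "norm A \<le> a" "norm (cross3 (column 1 A) (column 2 A)) \<ge> \<eta>" for A
  proof -
    define cr where "cr = cross3 (column 1 A) (column 2 A)"
    have crn: "norm cr > 0" using that eta unfolding cr_def by linarith
    define n where "n = (1 / norm cr) *\<^sub>R cr"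
    have nn: "norm n = 1" using crn unfolding n_def by simp
    have "det (augm A n) = cr \<bullet> n" unfolding det_augm cr_def ..
    also have "\<dots> = norm cr" unfolding n_def using crn by (simp add: power2_norm_eq_inner[symmetric] power2_eq_square)
    finally have "det (augm A n) \<ge> \<eta>" using that unfolding cr_def by simp
    moreover have "norm (augm A n) \<le> a + 1" using norm_augm_le[of A n] nn that(1) by simp
    ultimately have "W (augm A n) \<le> ennreal M0" using M0 by blast
    moreover have "W0 W A \<le> W (augm A n)" unfolding W0_def by (rule INF_lower) simp
    ultimately show ?thesis by simp
  qed
  obtain C1 where C1: "C1 > 0" "\<And>F. W F \<ge> ennreal (C1 * norm F powr p - 1 / C1)"
    using hyps_W_D(4)[OF hW] by blast
  define Q where "Q = (M0 + 1 + 1 / C1) / C1"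
  define R where "R = Q powr (1 / p)"
  have "Q > 0" unfolding Q_def using C1 M0 by (intro divide_pos_pos add_pos_pos) auto
  then have "R > 0" unfolding R_def by simp
  have ii: "norm F \<le> R" if "W F \<le> ennreal (M0+1)" for F
  proof -
    have "ennreal (C1 * norm F powr p - 1 / C1) \<le> ennreal (M0 + 1)" using C1(2)[of F] that by simp
    then have "C1 * norm F powr p - 1 / C1 \<le> M0 + 1" using M0 by (subst (asm) ennreal_le_iff) auto
    moreover have "C1 * Q = M0 + 1 + 1 / C1" unfolding Q_def using C1 by simp
    ultimately have "C1 * norm F powr p \<le> C1 * Q" by linarith
    then have "norm F powr p \<le> Q" using C1 by simp
    then have "(norm F powr p) powr (1/p) \<le> R" unfolding R_def using p by (intro powr_mono2) auto
    moreover have "(norm F powr p) powr (1/p) = norm F" using p by (simp add: powr_powr)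
    ultimately show ?thesis by simp
  qed
  have ii': "norm \<xi> \<le> R" if "W (augm A \<xi>) \<le> ennreal (M0+1)" for A \<xi>
    using ii[OF that] norm_augm_ge[of \<xi> A] by linarith
  define S where "S = cball 0 (a + R) \<inter> {F. W F \<le> ennreal (M0+1)}"
  have "closed {F. W F \<le> ennreal (M0+1)}"
    by (rule closed_Collect_le[OF hyps_W_D(1)[OF hW]]) simp
  then have cS: "compact S" unfolding S_def by (intro compact_Int_closed) auto
  have "\<exists>\<delta>>0. \<forall>F\<in>S. det F \<ge> \<delta>"
  proof (cases "S = {}")
    case True then show ?thesis by (intro exI[of _ 1]) auto
  next
    case False
    obtain F0 where F0: "F0 \<in> S" "\<And>F. F \<in> S \<Longrightarrow> det F0 \<le> det F"
      using continuous_attains_inf[OF cS False continuous_on_det3] by blast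
    have "W F0 < \<infinity>" using F0(1) unfolding S_def by (auto simp: le_less_trans)
    then have "det F0 > 0" using hyps_W_D(3)[OF hW, of F0] by (cases "det F0 > 0") auto
    then show ?thesis using F0 by blast
  qed
  then obtain \<delta> where d: "\<delta> > 0" "\<And>F. F \<in> S \<Longrightarrow> det F \<ge> \<delta>" by blast
  have iii: "det F \<ge> \<delta>" if "norm F \<le> a + R" "W F \<le> ennreal (M0+1)" for F
    using d(2)[of F] that unfolding S_def by auto
  show ?thesis using M0(1) \<open>R > 0\<close> d(1) i ii' iii by blast
qed

lemma W_uc:
  assumes hW: "hyps_W p W" and d: "d > 0" and e: "e > 0"
  shows "\<exists>\<rho>>0. \<forall>F F'. norm F \<le> r \<and> norm F' \<le> r \<and> det F \<ge> d \<and> norm (F - F') < \<rho> \<longrightarrow>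
     det F' \<ge> d/2 \<and> \<bar>enn2real (W F) - enn2real (W F')\<bar> < e"
proof -
  have uc1: "uniformly_continuous_on (cball 0 r) (\<lambda>F::real^3^3. det F)"
    by (rule compact_uniformly_continuous[OF continuous_on_det3 compact_cball])
  obtain \<rho>1 where r1: "\<rho>1 > 0" "\<forall>F::real^3^3\<in>cball 0 r. \<forall>F'\<in>cball 0 r. dist F' F < \<rho>1 \<longrightarrow> dist (det F') (det F) < d/2"
    using uc1[unfolded uniformly_continuous_on_def, rule_format, OF half_gt_zero[OF d]] by (elim exE conjE) (rule that, assumption+)
  define K where "K = cball 0 r \<inter> {F::real^3^3. d/2 \<le> det F}"
  have "closed {F::real^3^3. d/2 \<le> det F}"
    by (rule closed_Collect_le) (auto intro: continuous_on_det3)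
  then have cK: "compact K" unfolding K_def by (intro compact_Int_closed) auto
  have fin: "W F < \<infinity>" if "F \<in> K" for F
    using that d hyps_W_D(2)[OF hW, of F] unfolding K_def by auto
  have "continuous_on K (\<lambda>F. enn2real (W F))"
    unfolding continuous_on_def
  proof (intro ballI)
    fix F assume F: "F \<in> K"
    have "(W \<longlongrightarrow> W F) (at F within K)"
      using hyps_W_D(1)[OF hW] by (meson continuous_on_def continuous_on_subset subset_UNIV F)
    then have "(W \<longlongrightarrow> ennreal (enn2real (W F))) (at F within K)" using fin[OF F] by simp
    then show "((\<lambda>F. enn2real (W F)) \<longlongrightarrow> enn2real (W F)) (at F within K)"
      by (rule tendsto_enn2real) simp
  qed
  then have uc2: "uniformly_continuous_on K (\<lambda>F. enn2real (W F))"
    using cK by (rule compact_uniformly_continuous)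
  obtain \<rho>2 where r2: "\<rho>2 > 0" "\<forall>F\<in>K. \<forall>F'\<in>K. dist F' F < \<rho>2 \<longrightarrow> dist (enn2real (W F')) (enn2real (W F)) < e"
    using uc2[unfolded uniformly_continuous_on_def, rule_format, OF e] by (elim exE conjE) (rule that, assumption+)
  show ?thesis
  proof (intro exI[of _ "min \<rho>1 \<rho>2"] conjI allI impI)
    show "min \<rho>1 \<rho>2 > 0" using r1 r2 by simp
    fix F F' :: "real^3^3" assume H: "norm F \<le> r \<and> norm F' \<le> r \<and> d \<le> det F \<and> norm (F - F') < min \<rho>1 \<rho>2"
    then have "dist F' F < \<rho>1" by (simp add: dist_norm norm_minus_commute)
    moreover have "F \<in> cball 0 r" "F' \<in> cball 0 r" using H by auto
    ultimately have "dist (det F') (det F) < d/2" using r1(2)[rule_format, of F F'] by simp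
    then show dF': "det F' \<ge> d/2" using H unfolding dist_real_def by linarith
    have "F \<in> K" "F' \<in> K" unfolding K_def using H dF' d by auto
    moreover have "dist F' F < \<rho>2" using H by (simp add: dist_norm norm_minus_commute)
    ultimately have "dist (enn2real (W F')) (enn2real (W F)) < e" using r2(2) by auto
    then show "\<bar>enn2real (W F) - enn2real (W F')\<bar> < e" by (simp add: dist_real_def abs_minus_commute)
  qed
qed



lemma enn_split: "(s::ennreal) < top \<Longrightarrow> s = (s - g) + min s g"
  by (metis diff_add_self_ennreal diff_eq_0_ennreal min.cobounded1 min_def)
lemma enn_split2: "(s::ennreal) < top \<Longrightarrow> s \<le> f + g \<Longrightarrow> s - g \<le> f"
  by (metis add.commute ennreal_minus_le_iff top.not_eq_extremum)

lemma nn_integral_subadd: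
  assumes g: "g \<in> borel_measurable M"
  shows "(\<integral>\<^sup>+ x. f x + g x \<partial>M) \<le> (\<integral>\<^sup>+ x. f x \<partial>M) + (\<integral>\<^sup>+ x. g x \<partial>M)"
  unfolding nn_integral_def_finite[of M "\<lambda>x. f x + g x"]
proof (rule SUP_least)
  fix s assume "s \<in> {s. simple_function M s \<and> s \<le> (\<lambda>x. f x + g x) \<and> (\<forall>x. s x < top)}"
  then have s: "simple_function M s" "\<And>x. s x \<le> f x + g x" "\<And>x. s x < top" by (auto simp: le_fun_def)
  have sm: "s \<in> borel_measurable M" using s(1) by (rule borel_measurable_simple_function)
  have "integral\<^sup>S M s = (\<integral>\<^sup>+ x. s x \<partial>M)" using nn_integral_eq_simple_integral[OF s(1)] by simp
  also have "\<dots> = (\<integral>\<^sup>+ x. (s x - g x) + min (s x) (g x) \<partial>M)"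
    using enn_split[OF s(3)] by metis
  also have "\<dots> = (\<integral>\<^sup>+ x. (s x - g x) \<partial>M) + (\<integral>\<^sup>+ x. min (s x) (g x) \<partial>M)"
    using sm g by (intro nn_integral_add) auto
  also have "\<dots> \<le> (\<integral>\<^sup>+ x. f x \<partial>M) + (\<integral>\<^sup>+ x. g x \<partial>M)"
    using enn_split2[OF s(3) s(2)] by (intro add_mono nn_integral_mono) auto
  finally show "integral\<^sup>S M s \<le> (\<integral>\<^sup>+ x. f x \<partial>M) + (\<integral>\<^sup>+ x. g x \<partial>M)" .
qed



definition cellidx :: "real \<Rightarrow> real^2 \<Rightarrow> int \<times> int" where
  "cellidx h x = (\<lfloor>x$1 / h\<rfloor>, \<lfloor>x$2 / h\<rfloor>)"

definition wt :: "real \<Rightarrow> real \<Rightarrow> real^2 \<Rightarrow> real" where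
  "wt h \<theta> x = min 1 (\<bar>sin ((pi / h) * x$1)\<bar> * (1 / \<theta>)) * min 1 (\<bar>sin ((pi / h) * x$2)\<bar> * (1 / \<theta>))"

lemma wt_range: "\<theta> > 0 \<Longrightarrow> 0 \<le> wt h \<theta> x \<and> wt h \<theta> x \<le> 1"
  unfolding wt_def by (auto intro!: mult_le_one)

lemma continuous_wt: "continuous_on S (wt h \<theta>)"
  unfolding wt_def by (intro continuous_intros)

lemma wt_one: "\<theta> > 0 \<Longrightarrow> \<bar>sin ((pi / h) * x$1)\<bar> \<ge> \<theta> \<Longrightarrow> \<bar>sin ((pi / h) * x$2)\<bar> \<ge> \<theta> \<Longrightarrow> wt h \<theta> x = 1"
  unfolding wt_def by simp

lemma sin_nonint: "h \<noteq> 0 \<Longrightarrow> sin ((pi / h) * t) \<noteq> 0 \<Longrightarrow> t / h \<notin> \<int>"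
  by (metis Ints_cases mult.commute sin_zero_iff_int2 times_divide_eq_right)

lemma cont_phi0:
  assumes h: "h > 0" and th: "\<theta> > 0" and nu: "continuous_on S \<nu>" and B: "\<And>k. norm (\<xi> k) \<le> B"
  shows "continuous_on S (\<lambda>x. (1 - wt h \<theta> x) *\<^sub>R \<nu> x + wt h \<theta> x *\<^sub>R \<xi> (cellidx h x))"
  unfolding continuous_on_eq_continuous_within
proof
  fix x assume x: "x \<in> S"
  have nux: "(\<nu> \<longlongrightarrow> \<nu> x) (at x within S)" using nu x by (simp add: continuous_on_def)
  have wtx: "(wt h \<theta> \<longlongrightarrow> wt h \<theta> x) (at x within S)" using continuous_wt x by (simp add: continuous_on_def)
  show "continuous (at x within S) (\<lambda>x. (1 - wt h \<theta> x) *\<^sub>R \<nu> x + wt h \<theta> x *\<^sub>R \<xi> (cellidx h x))"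
    unfolding continuous_within
  proof (cases "wt h \<theta> x = 0")
    case True
    have ta: "((\<lambda>z. (1 - wt h \<theta> z) *\<^sub>R \<nu> z) \<longlongrightarrow> (1 - wt h \<theta> x) *\<^sub>R \<nu> x) (at x within S)"
      by (intro tendsto_intros nux wtx)
    have tb: "((\<lambda>z. wt h \<theta> z *\<^sub>R \<xi> (cellidx h z)) \<longlongrightarrow> 0) (at x within S)"
    proof (rule Lim_null_comparison)
      show "\<forall>\<^sub>F z in at x within S. norm (wt h \<theta> z *\<^sub>R \<xi> (cellidx h z)) \<le> \<bar>wt h \<theta> z\<bar> * B"
        using B by (intro always_eventually allI) (simp add: mult_left_mono)
      have "((\<lambda>z. \<bar>wt h \<theta> z\<bar> * B) \<longlongrightarrow> \<bar>wt h \<theta> x\<bar> * B) (at x within S)"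
        by (intro tendsto_intros wtx)
      then show "((\<lambda>z. \<bar>wt h \<theta> z\<bar> * B) \<longlongrightarrow> 0) (at x within S)" using True by simp
    qed
    show "((\<lambda>x. (1 - wt h \<theta> x) *\<^sub>R \<nu> x + wt h \<theta> x *\<^sub>R \<xi> (cellidx h x)) \<longlongrightarrow>
        (1 - wt h \<theta> x) *\<^sub>R \<nu> x + wt h \<theta> x *\<^sub>R \<xi> (cellidx h x)) (at x within S)"
      using tendsto_add[OF ta tb] True by simp
  next
    case False
    then have s1: "sin ((pi / h) * x$1) \<noteq> 0" and s2: "sin ((pi / h) * x$2) \<noteq> 0"
      unfolding wt_def using th by auto
    have n1: "x$1 / h \<notin> \<int>" using sin_nonint[OF _ s1] h by simp
    have n2: "x$2 / h \<notin> \<int>" using sin_nonint[OF _ s2] h by simp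
    have t1: "((\<lambda>z. z$1 / h) \<longlongrightarrow> x$1 / h) (at x within S)" using h by (intro tendsto_intros) auto
    have t2: "((\<lambda>z. z$2 / h) \<longlongrightarrow> x$2 / h) (at x within S)" using h by (intro tendsto_intros) auto
    have ev: "\<forall>\<^sub>F z in at x within S. cellidx h z = cellidx h x"
      using eventually_floor_eq[OF t1 n1] eventually_floor_eq[OF t2 n2]
      by eventually_elim (simp add: cellidx_def)
    have "((\<lambda>z. (1 - wt h \<theta> z) *\<^sub>R \<nu> z + wt h \<theta> z *\<^sub>R \<xi> (cellidx h x)) \<longlongrightarrow>
        (1 - wt h \<theta> x) *\<^sub>R \<nu> x + wt h \<theta> x *\<^sub>R \<xi> (cellidx h x)) (at x within S)"
      by (intro tendsto_intros nux wtx)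
    then show "((\<lambda>x. (1 - wt h \<theta> x) *\<^sub>R \<nu> x + wt h \<theta> x *\<^sub>R \<xi> (cellidx h x)) \<longlongrightarrow>
        (1 - wt h \<theta> x) *\<^sub>R \<nu> x + wt h \<theta> x *\<^sub>R \<xi> (cellidx h x)) (at x within S)"
      by (rule Lim_transform_eventually) (use ev in \<open>auto elim: eventually_mono\<close>)
  qed
qed




lemma matmul_sub: "((A::real^2^3) - B) ** (M::real^2^2) = A ** M - B ** M"
  by (simp add: matrix_matrix_mult_def vec_eq_iff sum_subtractf algebra_simps)

lemma norm_augm_diffA: "norm (augm A \<xi> - augm B \<xi>) \<le> norm (A - B)"
  using norm_augm_le[of "A - B" 0] by (simp add: augm_diff)

lemma norm_augm_diffxi: "norm (augm A \<xi> - augm A \<zeta>) \<le> norm (\<xi> - \<zeta>)"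
  using norm_augm_le[of 0 "\<xi> - \<zeta>"] by (simp add: augm_diff)

lemma det_augm_comb: "det (augm A ((1-w) *\<^sub>R \<nu> + w *\<^sub>R \<xi>)) = (1-w) * det (augm A \<nu>) + w * det (augm A \<xi>)"
  by (simp add: det_augm inner_add_right)

lemma W_close:
  assumes "hyps_W p W" "det F > 0" "det F' > 0" "\<bar>enn2real (W F) - enn2real (W F')\<bar> < e"
  shows "W F' \<le> W F + ennreal e"
proof -
  have f: "W F < \<infinity>" "W F' < \<infinity>" using hyps_W_D(2)[OF assms(1)] assms(2,3) by auto
  have le: "enn2real (W F') \<le> enn2real (W F) + e" using assms(4) by linarith
  have "e \<ge> 0" using assms(4) by linarith
  from le have "ennreal (enn2real (W F')) \<le> ennreal (enn2real (W F) + e)" by (rule ennreal_leI)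
  also have "\<dots> = ennreal (enn2real (W F)) + ennreal e" using \<open>e \<ge> 0\<close> by (intro ennreal_plus) auto
  finally show ?thesis using f by simp
qed

lemma cell_close:
  assumes "h > 0" "cellidx h x = cellidx h y"
  shows "dist x y < 2 * h"
proof -
  have c: "\<bar>x$i - y$i\<bar> < h" if "\<lfloor>x$i / h\<rfloor> = \<lfloor>y$i / h\<rfloor>" for i
  proof -
    have "\<bar>x$i / h - y$i / h\<bar> < 1"
      using that floor_correct[of "x$i / h"] floor_correct[of "y$i / h"] by linarith
    then show ?thesis using assms(1) by (metis abs_div_pos diff_divide_distrib divide_less_eq_1_pos)
  qed
  have "\<lfloor>x$1 / h\<rfloor> = \<lfloor>y$1 / h\<rfloor>" "\<lfloor>x$2 / h\<rfloor> = \<lfloor>y$2 / h\<rfloor>" using assms(2) by (auto simp: cellidx_def)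
  then have "\<bar>x$1 - y$1\<bar> < h" "\<bar>x$2 - y$2\<bar> < h" using c by auto
  moreover have "dist x y \<le> \<bar>(x - y)$1\<bar> + \<bar>(x - y)$2\<bar>"
    using norm_le_l1_cart[of "x - y"] by (simp add: dist_norm sum_2)
  ultimately show ?thesis by simp
qed


lemma closed_leb: "closed (S::'a::euclidean_space set) \<Longrightarrow> S \<in> sets lebesgue"
  by (metis borel_closed sets_completionI_sets sets_lborel)
lemma open_leb: "open (S::'a::euclidean_space set) \<Longrightarrow> S \<in> sets lebesgue"
  by (metis borel_open sets_completionI_sets sets_lborel)

lemma sin_zero_grid: "h > 0 \<Longrightarrow> sin ((pi / h) * t) = 0 \<Longrightarrow> \<exists>i::int. t = real_of_int i * h"
proof -
  assume h: "h > 0" and s: "sin ((pi / h) * t) = 0"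
  obtain i :: int where "(pi / h) * t = real_of_int i * pi" using s sin_zero_iff_int2 by blast
  then have "t = real_of_int i * h" using h by (simp add: field_simps)
  then show ?thesis by blast
qed

lemma two_small:
  assumes "\<And>n::nat. \<bar>u\<bar> < 1 / (real n + 1) \<or> \<bar>v\<bar> < 1 / (real n + 1)"
  shows "u = 0 \<or> v = (0::real)"
proof (rule ccontr)
  assume "\<not> ?thesis"
  then have pos: "min \<bar>u\<bar> \<bar>v\<bar> > 0" by simp
  then obtain n where n: "inverse (real (Suc n)) < min \<bar>u\<bar> \<bar>v\<bar>"
    using reals_Archimedean[OF pos] by blast
  then have "1 / (real n + 1) < min \<bar>u\<bar> \<bar>v\<bar>" by (simp add: inverse_eq_divide add.commute)
  then have "1 / (real n + 1) < \<bar>u\<bar>" "1 / (real n + 1) < \<bar>v\<bar>" by auto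
  with assms[of n] show False by linarith
qed


lemma main_fixed:
  fixes p :: real and W :: "real^3^3 \<Rightarrow> ennreal" and \<eta> a b :: real
  assumes p: "1 < p" and hW: "hyps_W p W" and eta: "\<eta> > 0" and a: "a \<ge> 0" and b: "b \<ge> 0"
  shows "\<exists>\<beta>>0. \<forall>(E :: (real^2) set) (G :: real^2 \<Rightarrow> real^2^3) (\<epsilon>::real) T (\<Psi> :: real^2 \<Rightarrow> real^2^2).
       open E \<and> bounded E \<and> continuous_on (closure E) G \<and>
       (\<forall>x\<in>closure E. norm (cross3 (column 1 (G x)) (column 2 (G x))) \<ge> \<eta>) \<and>
       0 < \<epsilon> \<and> \<epsilon> < 1/2 \<and> triangulation T E \<and> pw_const T E \<Psi> \<and>
       (\<forall>x\<in>E. \<bar>det (\<Psi> x) - 1\<bar> \<le> \<epsilon>) \<and> (\<forall>x\<in>E. norm (G x) \<le> a) \<and> (\<forall>x\<in>E. norm (\<Psi> x) \<le> b)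
     \<longrightarrow> (\<exists>\<phi> :: real^2 \<Rightarrow> real^3. C_inf \<phi> \<and> (\<forall>x\<in>E. norm (\<phi> x) \<le> \<beta>) \<and>
            (\<forall>x\<in>E. det (augm (G x ** \<Psi> x) (\<phi> x)) \<ge> 1 / \<beta>) \<and>
            (\<integral>\<^sup>+ x\<in>E. W (augm (G x ** \<Psi> x) (\<phi> x)) \<partial>lebesgue)
              \<le> (\<integral>\<^sup>+ x\<in>E. W0 W (G x ** \<Psi> x) \<partial>lebesgue) + ennreal \<epsilon>)"
proof -
  define Acap where "Acap = 12 * (a * b)"
  have Acap0: "Acap \<ge> 0" using a b unfolding Acap_def by simp
  have eta2: "\<eta>/2 > 0" using eta by simp
  obtain M0 R \<delta> where M0: "M0 > 0" and R0: "R > 0" and d0: "\<delta> > 0"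
    and Wi': "\<forall>A. norm A \<le> Acap \<and> norm (cross3 (column 1 A) (column 2 A)) \<ge> \<eta>/2 \<longrightarrow> W0 W A \<le> ennreal M0"
    and Wii': "\<forall>A \<xi>. W (augm A \<xi>) \<le> ennreal (M0+1) \<longrightarrow> norm \<xi> \<le> R"
    and Wiii': "\<forall>F. norm F \<le> Acap + R \<and> W F \<le> ennreal (M0+1) \<longrightarrow> det F \<ge> \<delta>"
    using W_consts[OF hW p eta2 Acap0] by (elim exE conjE) (rule that, assumption+)
  have Wi: "\<And>A. norm A \<le> Acap \<Longrightarrow> norm (cross3 (column 1 A) (column 2 A)) \<ge> \<eta>/2 \<Longrightarrow> W0 W A \<le> ennreal M0"
    using Wi' by blast
  have Wii: "\<And>A \<xi>. W (augm A \<xi>) \<le> ennreal (M0+1) \<Longrightarrow> norm \<xi> \<le> R"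
    using Wii' by blast
  have Wiii: "\<And>F. norm F \<le> Acap + R \<Longrightarrow> W F \<le> ennreal (M0+1) \<Longrightarrow> det F \<ge> \<delta>"
    using Wiii' by blast
  define \<delta>1 where "\<delta>1 = min (\<delta>/3) \<eta>"
  have d1: "\<delta>1 > 0" unfolding \<delta>1_def using d0 eta by simp
  define Rb where "Rb = Acap + R + 2"
  obtain Mbig where Mbig: "Mbig > 0" "\<And>F. det F \<ge> \<delta>1/4 \<Longrightarrow> norm F \<le> Rb \<Longrightarrow> W F \<le> ennreal Mbig"
  proof -
    have "\<delta>1/4 > 0" using d1 by simp
    from W_upper[OF hW _ this, of Rb] p obtain M where "M > 0" "\<forall>F. \<delta>1/4 \<le> det F \<and> norm F \<le> Rb \<longrightarrow> W F \<le> ennreal M"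
      by auto
    then show ?thesis using that by blast
  qed
  define \<beta> where "\<beta> = max (R + 2) (4 / \<delta>1)"
  have \<beta>0: "\<beta> > 0" unfolding \<beta>_def using R0 by simp
  show ?thesis
  proof (intro exI[of _ \<beta>] conjI \<beta>0 allI impI, elim conjE)
    fix E :: "(real^2) set" and G :: "real^2 \<Rightarrow> real^2^3" and \<epsilon> :: real and T and \<Psi> :: "real^2 \<Rightarrow> real^2^2"
    assume oE: "open E" and bE: "bounded E" and cG: "continuous_on (closure E) G"
      and crG: "\<forall>x\<in>closure E. norm (cross3 (column 1 (G x)) (column 2 (G x))) \<ge> \<eta>"
      and e0: "0 < \<epsilon>" and e2: "\<epsilon> < 1/2" and tri: "triangulation T E" and pw: "pw_const T E \<Psi>"
      and dPsi: "\<forall>x\<in>E. \<bar>det (\<Psi> x) - 1\<bar> \<le> \<epsilon>" and Ga: "\<forall>x\<in>E. norm (G x) \<le> a" and Pb: "\<forall>x\<in>E. norm (\<Psi> x) \<le> b"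
    show "\<exists>\<phi> :: real^2 \<Rightarrow> real^3. C_inf \<phi> \<and> (\<forall>x\<in>E. norm (\<phi> x) \<le> \<beta>) \<and>
            (\<forall>x\<in>E. det (augm (G x ** \<Psi> x) (\<phi> x)) \<ge> 1 / \<beta>) \<and>
            (\<integral>\<^sup>+ x\<in>E. W (augm (G x ** \<Psi> x) (\<phi> x)) \<partial>lebesgue)
              \<le> (\<integral>\<^sup>+ x\<in>E. W0 W (G x ** \<Psi> x) \<partial>lebesgue) + ennreal \<epsilon>"
    proof (cases "E = {}")
      case True
      show ?thesis by (intro exI[of _ "\<lambda>x. 0"]) (simp add: True poly_C_inf)
    next
      case False
      obtain c where c: "\<forall>x\<in>E. \<exists>K\<in>T. x \<in> K \<and> \<Psi> x = c K" using pw unfolding pw_const_def by blast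
      define A where "A x = G x ** \<Psi> x" for x
      have EcE: "E \<subseteq> closure E" by (rule closure_subset)
      have detPsi: "det (\<Psi> x) \<ge> 1/2" "det (\<Psi> x) \<le> 3/2" if "x \<in> E" for x
        using dPsi that e2 by (auto simp: abs_le_iff)
      have normGM: "norm (G x ** M) \<le> Acap" if "x \<in> E" "norm M \<le> b" for x and M :: "real^2^2"
      proof -
        have "norm (G x ** M) \<le> 12 * (norm (G x) * norm M)" by (rule norm_matmul)
        also have "\<dots> \<le> 12 * (a * b)" using Ga that a by (intro mult_left_mono mult_mono) auto
        finally show ?thesis unfolding Acap_def .
      qed
      have normA: "norm (A x) \<le> Acap" if "x \<in> E" for x
        unfolding A_def using normGM Pb that by blast
      have crossA: "norm (cross3 (column 1 (A x)) (column 2 (A x))) \<ge> \<eta>/2" if "x \<in> E" for x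
      proof -
        have "norm (cross3 (column 1 (A x)) (column 2 (A x))) = \<bar>det (\<Psi> x)\<bar> * norm (cross3 (column 1 (G x)) (column 2 (G x)))"
          unfolding A_def cross_mult by simp
        moreover have "\<bar>det (\<Psi> x)\<bar> \<ge> 1/2" using detPsi[OF that] by simp
        moreover have "norm (cross3 (column 1 (G x)) (column 2 (G x))) \<ge> \<eta>" using crG that EcE by blast
        ultimately have "(1/2) * \<eta> \<le> \<bar>det (\<Psi> x)\<bar> * norm (cross3 (column 1 (G x)) (column 2 (G x)))"
          using eta by (intro mult_mono) auto
        then show ?thesis using \<open>norm (cross3 (column 1 (A x)) (column 2 (A x))) = _\<close> by simp
      qed
      have W0A: "W0 W (A x) \<le> ennreal M0" if "x \<in> E" for x
        using Wi normA crossA that by blast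
      have Eleb: "E \<in> lmeasurable" using lmeasurable_open[OF bE oE] .
      define mE where "mE = measure lebesgue E"
      have mE0: "mE \<ge> 0" unfolding mE_def by simp
      define \<epsilon>1 where "\<epsilon>1 = \<epsilon> / (8 * (mE + 1))"
      have e1: "\<epsilon>1 > 0" unfolding \<epsilon>1_def using e0 mE0 by simp
      have e1le: "\<epsilon>1 \<le> 1"
      proof -
        have "\<epsilon>1 \<le> \<epsilon> / 8" unfolding \<epsilon>1_def using e0 mE0 by (intro divide_left_mono) auto
        then show ?thesis using e2 by simp
      qed
      have e1mE: "4 * \<epsilon>1 * mE \<le> \<epsilon> / 2"
      proof -
        have "4 * \<epsilon>1 * mE = (\<epsilon> / 2) * (mE / (mE + 1))" unfolding \<epsilon>1_def using mE0 by (simp add: field_simps)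
        also have "\<dots> \<le> (\<epsilon> / 2) * 1" using e0 mE0 by (intro mult_left_mono) auto
        finally show ?thesis by simp
      qed
      obtain \<rho>a where \<rho>a: "\<rho>a > 0" "\<forall>F F'. norm F \<le> Rb \<and> norm F' \<le> Rb \<and> det F \<ge> \<delta> \<and> norm (F - F') < \<rho>a \<longrightarrow>
          det F' \<ge> \<delta>/2 \<and> \<bar>enn2real (W F) - enn2real (W F')\<bar> < \<epsilon>1"
        using W_uc[OF hW d0 e1, of Rb] by (elim exE conjE) (rule that, assumption+)
      have d12: "\<delta>1/2 > 0" using d1 by simp
      obtain \<rho>b where \<rho>b: "\<rho>b > 0" "\<forall>F F'. norm F \<le> Rb \<and> norm F' \<le> Rb \<and> det F \<ge> \<delta>1/2 \<and> norm (F - F') < \<rho>b \<longrightarrow>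
          det F' \<ge> (\<delta>1/2)/2 \<and> \<bar>enn2real (W F) - enn2real (W F')\<bar> < \<epsilon>1"
        using W_uc[OF hW d12 e1, of Rb] by (elim exE conjE) (rule that, assumption+)
      have ucG: "uniformly_continuous_on (closure E) G"
        using cG bE by (intro compact_uniformly_continuous) auto
      have rr: "\<rho>a / (12 * (b + 1)) > 0" using \<rho>a b by simp
      obtain h0 where h0: "h0 > 0" "\<forall>x\<in>closure E. \<forall>y\<in>closure E. dist y x < h0 \<longrightarrow> dist (G y) (G x) < \<rho>a / (12 * (b + 1))"
        using ucG[unfolded uniformly_continuous_on_def, rule_format, OF rr] by (elim exE conjE) (rule that, assumption+)
      have GM: "norm (G x ** M - G y ** M) < \<rho>a" if "x \<in> E" "y \<in> E" "dist x y < h0" "norm M \<le> b" for x y and M :: "real^2^2"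
      proof -
        have "dist (G x) (G y) < \<rho>a / (12 * (b + 1))" using h0(2) that EcE by blast
        then have g: "norm (G x - G y) < \<rho>a / (12 * (b + 1))" by (simp add: dist_norm)
        have "norm (G x ** M - G y ** M) = norm ((G x - G y) ** M)" by (simp add: matmul_sub)
        also have "\<dots> \<le> 12 * (norm (G x - G y) * norm M)" by (rule norm_matmul)
        also have "\<dots> \<le> 12 * ((\<rho>a / (12 * (b + 1))) * b)"
          using g that(4) b rr by (intro mult_left_mono mult_mono) auto
        also have "\<dots> < \<rho>a" using \<rho>a b by (simp add: field_simps)
        finally show ?thesis .
      qed
      define Fr where "Fr = (\<Union>K\<in>T. frontier K)"
      have finT: "finite T" and triT: "\<And>K. K \<in> T \<Longrightarrow> triangle K" and UT: "\<Union>T = closure E"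
        using tri unfolding triangulation_def by auto
      have "T \<noteq> {}" using False UT closure_subset by fastforce
      then obtain K0 where K0: "K0 \<in> T" by blast
      have "frontier K0 \<noteq> {}"
      proof -
        have "K0 \<noteq> {}" using triangle_props(3)[OF triT[OF K0]] interior_subset by blast
        moreover have "K0 \<noteq> UNIV" using triangle_props(1)[OF triT[OF K0]] compact_imp_bounded not_bounded_UNIV by blast
        ultimately show ?thesis by (simp add: frontier_eq_empty)
      qed
      then have Frne: "Fr \<noteq> {}" unfolding Fr_def using K0 by blast
      have Frc: "closed Fr" unfolding Fr_def using finT by (intro closed_UN) auto
      have Frn: "negligible Fr" unfolding Fr_def using finT triangle_props(2)[OF triT]
        by (intro negligible_Union) (auto intro: negligible_convex_frontier)
      define B1 where "B1 n = E \<inter> {x. infdist x Fr \<le> 1 / (real n + 1)}" for n :: nat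
      have B1leb: "B1 n \<in> sets lebesgue" for n
      proof -
        have "closed {x. infdist x Fr \<le> 1 / (real n + 1)}"
          by (intro closed_Collect_le continuous_intros)
        then show ?thesis unfolding B1_def using open_leb[OF oE] closed_leb by blast
      qed
      have eMb: "\<epsilon> / (4 * Mbig) > 0" using e0 Mbig by simp
      obtain n where n: "measure lebesgue (B1 n) < \<epsilon> / (4 * Mbig)"
      proof -
        have "\<exists>n. measure lebesgue (B1 n) < \<epsilon> / (4 * Mbig)"
        proof (rule small_measure_decseq[OF B1leb _ _ Frn _ eMb])
          show "decseq B1" unfolding B1_def decseq_def
            by (auto intro: order_trans frac_le simp: divide_le_eq)
          show "bounded (B1 0)" unfolding B1_def using bE by (meson bounded_subset inf_le1)
          show "(\<Inter>n. B1 n) \<subseteq> Fr"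
          proof
            fix x assume "x \<in> (\<Inter>n. B1 n)"
            then have le: "infdist x Fr \<le> 1 / (real n + 1)" for n unfolding B1_def by auto
            have "infdist x Fr = 0"
            proof (rule ccontr)
              assume "infdist x Fr \<noteq> 0"
              then have "infdist x Fr > 0" using infdist_nonneg[of x Fr] by linarith
              then obtain n where "inverse (real (Suc n)) < infdist x Fr" using reals_Archimedean by blast
              with le[of n] show False by (simp add: inverse_eq_divide add.commute)
            qed
            then have "x \<in> closure Fr" using in_closure_iff_infdist_zero[OF Frne] by simp
            then show "x \<in> Fr" using Frc closure_closed by blast
          qed
        qed
        then show ?thesis using that by blast
      qed
      define h where "h = min (h0/2) (1 / (2 * (real n + 1)))"
      have h3: "2 * h \<le> 1 / (real n + 1)"
      proof -
        have "h \<le> 1 / (2 * (real n + 1))" unfolding h_def by simp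
        then have "2 * h \<le> 2 * (1 / (2 * (real n + 1)))" by simp
        also have "\<dots> = 1 / (real n + 1)" by (simp add: divide_simps)
        finally show ?thesis .
      qed
      have h: "h > 0" "2 * h \<le> h0" "2 * h \<le> 1 / (real n + 1)" unfolding h_def using h0 h3[unfolded h_def] by auto
      define B2 where "B2 m = E \<inter> {x. \<bar>sin ((pi / h) * x$1)\<bar> < 1 / (real m + 1) \<or> \<bar>sin ((pi / h) * x$2)\<bar> < 1 / (real m + 1)}" for m :: nat
      have B2leb: "B2 m \<in> sets lebesgue" for m
      proof -
        have "open {x::real^2. \<bar>sin ((pi / h) * x$1)\<bar> < 1 / (real m + 1) \<or> \<bar>sin ((pi / h) * x$2)\<bar> < 1 / (real m + 1)}"
          unfolding Collect_disj_eq by (intro open_Un open_Collect_less continuous_intros)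
        then show ?thesis unfolding B2_def using open_leb[OF oE] open_leb by blast
      qed
      define N where "N = (\<Union>i::int. {x::real^2. axis 1 1 \<bullet> x = real_of_int i * h}) \<union> (\<Union>i::int. {x::real^2. axis 2 1 \<bullet> x = real_of_int i * h})"
      have Nn: "negligible N" unfolding N_def
      proof (intro negligible_Un negligible_countable_Union)
        have "negligible {x::real^2. axis k 1 \<bullet> x = t}" for k t
          by (rule negligible_hyperplane) (simp add: axis_eq_0_iff)
        then show "\<And>S. S \<in> range (\<lambda>i::int. {x::real^2. axis 1 1 \<bullet> x = real_of_int i * h}) \<Longrightarrow> negligible S"
          "\<And>S. S \<in> range (\<lambda>i::int. {x::real^2. axis 2 1 \<bullet> x = real_of_int i * h}) \<Longrightarrow> negligible S" by auto
      qed auto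
      obtain m where m: "measure lebesgue (B2 m) < \<epsilon> / (4 * Mbig)"
      proof -
        have "\<exists>m. measure lebesgue (B2 m) < \<epsilon> / (4 * Mbig)"
        proof (rule small_measure_decseq[OF B2leb _ _ Nn _ eMb])
          have inv_mono: "\<And>m n. m \<le> n \<Longrightarrow> 1/(real n + 1) \<le> 1/(real m + 1)" by (simp add: frac_le)
          show "decseq B2" unfolding B2_def decseq_def
          proof (intro allI impI subsetI)
            fix m n x assume mn: "(m::nat) \<le> n" and x: "x \<in> E \<inter> {x. \<bar>sin ((pi / h) * x$1)\<bar> < 1 / (real n + 1) \<or> \<bar>sin ((pi / h) * x$2)\<bar> < 1 / (real n + 1)}"
            then show "x \<in> E \<inter> {x. \<bar>sin ((pi / h) * x$1)\<bar> < 1 / (real m + 1) \<or> \<bar>sin ((pi / h) * x$2)\<bar> < 1 / (real m + 1)}"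
              using inv_mono[OF mn] by auto
          qed
          show "bounded (B2 0)" unfolding B2_def using bE by (meson bounded_subset inf_le1)
          show "(\<Inter>n. B2 n) \<subseteq> N"
          proof
            fix x assume "x \<in> (\<Inter>n. B2 n)"
            then have "\<bar>sin ((pi / h) * x$1)\<bar> < 1 / (real n + 1) \<or> \<bar>sin ((pi / h) * x$2)\<bar> < 1 / (real n + 1)" for n
              unfolding B2_def by blast
            then have "sin ((pi / h) * x$1) = 0 \<or> sin ((pi / h) * x$2) = 0" by (rule two_small)
            then show "x \<in> N"
            proof
              assume "sin ((pi / h) * x$1) = 0"
              then obtain i :: int where "x$1 = real_of_int i * h" using sin_zero_grid h(1) by blast
              then have "axis 1 1 \<bullet> x = real_of_int i * h" by (simp add: inner_axis')
              then show ?thesis unfolding N_def by blast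
            next
              assume "sin ((pi / h) * x$2) = 0"
              then obtain i :: int where "x$2 = real_of_int i * h" using sin_zero_grid h(1) by blast
              then have "axis 2 1 \<bullet> x = real_of_int i * h" by (simp add: inner_axis')
              then show ?thesis unfolding N_def by blast
            qed
          qed
        qed
        then show ?thesis using that by blast
      qed
      define \<theta> where "\<theta> = 1 / (real m + 1)"
      have th: "\<theta> > 0" unfolding \<theta>_def by simp
      define rep where "rep k = (SOME y. y \<in> E \<and> cellidx h y = k)" for k
      have rep: "rep (cellidx h x) \<in> E \<and> cellidx h (rep (cellidx h x)) = cellidx h x" if "x \<in> E" for x
        unfolding rep_def by (rule someI[of _ x]) (use that in simp)
      have exmin: "\<exists>\<zeta>. W (augm (A y) \<zeta>) < W0 W (A y) + ennreal \<epsilon>1" if "y \<in> E" for y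
      proof -
        have fin: "W0 W (A y) \<noteq> \<infinity>" using W0A[OF that] by (auto simp: top_unique)
        show ?thesis using INF_approx_ennreal[OF e1 W0_def[of W "A y"] fin] by auto
      qed
      define \<xi> where "\<xi> k = (if \<exists>y\<in>E. cellidx h y = k then (SOME \<zeta>. W (augm (A (rep k)) \<zeta>) < W0 W (A (rep k)) + ennreal \<epsilon>1) else 0)" for k
      have \<xi>prop: "W (augm (A (rep (cellidx h x))) (\<xi> (cellidx h x))) < W0 W (A (rep (cellidx h x))) + ennreal \<epsilon>1" if "x \<in> E" for x
      proof -
        have "\<exists>y\<in>E. cellidx h y = cellidx h x" using that by blast
        then have "\<xi> (cellidx h x) = (SOME \<zeta>. W (augm (A (rep (cellidx h x))) \<zeta>) < W0 W (A (rep (cellidx h x))) + ennreal \<epsilon>1)"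
          unfolding \<xi>_def by simp
        then show ?thesis using someI_ex[OF exmin[OF conjunct1[OF rep[OF that]]]] by simp
      qed
      have nearM: "W (augm (A y) \<zeta>) \<le> ennreal (M0 + 1)" if "y \<in> E" "W (augm (A y) \<zeta>) < W0 W (A y) + ennreal \<epsilon>1" for y \<zeta>
      proof -
        have "W (augm (A y) \<zeta>) \<le> ennreal M0 + ennreal \<epsilon>1" using that(2) W0A[OF that(1)]
          by (meson add_right_mono less_imp_le order_trans)
        also have "\<dots> = ennreal (M0 + \<epsilon>1)" using M0 e1 by simp
        also have "\<dots> \<le> ennreal (M0 + 1)" using e1le by (intro ennreal_leI) simp
        finally show ?thesis .
      qed
      have \<xi>R: "norm (\<xi> k) \<le> R" for k
      proof (cases "\<exists>y\<in>E. cellidx h y = k")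
        case True
        then obtain x where x: "x \<in> E" "cellidx h x = k" by blast
        have "W (augm (A (rep (cellidx h x))) (\<xi> (cellidx h x))) \<le> ennreal (M0 + 1)"
          using nearM[OF conjunct1[OF rep[OF x(1)]] \<xi>prop[OF x(1)]] .
        then show ?thesis using Wii x(2) by blast
      next
        case False
        then show ?thesis unfolding \<xi>_def using R0 by simp
      qed
      define cr where "cr x = cross3 (column 1 (G x)) (column 2 (G x))" for x
      define nu where "nu x = (1 / norm (cr x)) *\<^sub>R cr x" for x
      have crpos: "norm (cr x) \<ge> \<eta>" if "x \<in> closure E" for x using crG that unfolding cr_def by blast
      have crne: "cr x \<noteq> 0" if "x \<in> closure E" for x
      proof
        assume "cr x = 0" then show False using crpos[OF that] eta by simp
      qed
      have cnu: "continuous_on (closure E) nu"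
      proof -
        have ccr: "continuous_on (closure E) cr" unfolding cr_def column_def
          by (intro continuous_on_cross continuous_intros cG)
        show ?thesis unfolding nu_def
          using crne by (intro continuous_intros ccr) auto
      qed
      have nu1: "norm (nu x) = 1" if "x \<in> closure E" for x
        using crne[OF that] unfolding nu_def by simp
      have detnu: "det (augm (G x) (nu x)) = norm (cr x)" if "x \<in> closure E" for x
      proof -
        have "det (augm (G x) (nu x)) = cr x \<bullet> nu x" unfolding det_augm cr_def ..
        also have "\<dots> = norm (cr x)" unfolding nu_def using crne[OF that]
          by (simp add: power2_norm_eq_inner[symmetric] power2_eq_square)
        finally show ?thesis .
      qed
      define \<phi>0 where "\<phi>0 x = (1 - wt h \<theta> x) *\<^sub>R nu x + wt h \<theta> x *\<^sub>R \<xi> (cellidx h x)" for x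
      have c\<phi>0: "continuous_on (closure E) \<phi>0"
        unfolding \<phi>0_def using cont_phi0[OF h(1) th cnu \<xi>R] .
      define \<tau> where "\<tau> = min 1 \<rho>b"
      have tau: "\<tau> > 0" "\<tau> \<le> 1" "\<tau> \<le> \<rho>b" unfolding \<tau>_def using \<rho>b by auto
      obtain \<phi> where \<phi>: "polynomial_function \<phi>" "\<forall>x\<in>closure E. norm (\<phi>0 x - \<phi> x) < \<tau>"
        using Stone_Weierstrass_polynomial_function[OF _ c\<phi>0 tau(1)] bE by auto
      have RbA: "Acap + R \<le> Rb" unfolding Rb_def by simp
      have pt: "norm (\<phi> x) \<le> \<beta> \<and> det (augm (A x) (\<phi> x)) \<ge> 1 / \<beta> \<and> W (augm (A x) (\<phi> x)) \<le> ennreal Mbig \<and>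
          (x \<notin> B1 n \<union> B2 m \<longrightarrow> W (augm (A x) (\<phi> x)) \<le> W0 W (A x) + ennreal (4 * \<epsilon>1))" if xE: "x \<in> E" for x
      proof -
        define k where "k = cellidx h x"
        define y where "y = rep k"
        have y: "y \<in> E" "cellidx h y = k" using rep[OF xE] unfolding y_def k_def by auto
        have dxy2: "dist x y < 2 * h" using cell_close[OF h(1), of x y] y(2) unfolding k_def by simp
        have dxy: "dist x y < h0" using dxy2 h(2) by linarith
        define M where "M = \<Psi> y"
        have Mb: "norm M \<le> b" using Pb y(1) unfolding M_def by simp
        have dM: "det M \<ge> 1/2" "det M \<le> 3/2" using detPsi[OF y(1)] unfolding M_def by auto
        have Ay: "A y = G y ** M" unfolding A_def M_def ..
        have xiprop: "W (augm (A y) (\<xi> k)) < W0 W (A y) + ennreal \<epsilon>1" using \<xi>prop[OF xE] unfolding y_def k_def .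
        have xinear: "W (augm (A y) (\<xi> k)) \<le> ennreal (M0+1)" using nearM[OF y(1) xiprop] .
        have xiR: "norm (\<xi> k) \<le> R" by (rule \<xi>R)
        define Fy where "Fy = augm (A y) (\<xi> k)"
        have nFy: "norm Fy \<le> Acap + R" using norm_augm_le[of "A y" "\<xi> k"] normA[OF y(1)] xiR unfolding Fy_def by linarith
        have dFy: "det Fy \<ge> \<delta>" using Wiii[OF nFy] xinear unfolding Fy_def by simp
        define F' where "F' = augm (G x ** M) (\<xi> k)"
        have nF': "norm F' \<le> Acap + R" using norm_augm_le[of "G x ** M" "\<xi> k"] normGM[OF xE Mb] xiR unfolding F'_def by linarith
        have dFF': "norm (Fy - F') < \<rho>a"
        proof -
          have "norm (Fy - F') \<le> norm (G y ** M - G x ** M)" unfolding Fy_def F'_def Ay by (rule norm_augm_diffA)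
          also have "\<dots> < \<rho>a" using GM[OF y(1) xE _ Mb] dxy by (simp add: dist_commute)
          finally show ?thesis .
        qed
        have uF': "det F' \<ge> \<delta>/2 \<and> \<bar>enn2real (W Fy) - enn2real (W F')\<bar> < \<epsilon>1"
        proof -
          have "norm Fy \<le> Rb" "norm F' \<le> Rb" using nFy nF' RbA by linarith+
          then show ?thesis using \<rho>a(2) dFy dFF' by blast
        qed
        have detGxi: "det (augm (G x) (\<xi> k)) \<ge> \<delta>/3"
        proof (rule ccontr)
          assume "\<not> ?thesis"
          then have dl: "det (augm (G x) (\<xi> k)) < \<delta>/3" by simp
          have eq: "det F' = det M * det (augm (G x) (\<xi> k))" unfolding F'_def by (rule det_augm_mult)
          have "det M * det (augm (G x) (\<xi> k)) < \<delta>/2"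
          proof (cases "det (augm (G x) (\<xi> k)) \<le> 0")
            case True
            then have "det M * det (augm (G x) (\<xi> k)) \<le> 0" using dM by (intro mult_nonneg_nonpos) auto
            then show ?thesis using d0 by linarith
          next
            case False
            then have "det M * det (augm (G x) (\<xi> k)) \<le> (3/2) * det (augm (G x) (\<xi> k))"
              using dM by (intro mult_right_mono) auto
            then show ?thesis using dl by linarith
          qed
          then show False using uF' eq by linarith
        qed
        define w where "w = wt h \<theta> x"
        have w01: "0 \<le> w" "w \<le> 1" using wt_range[OF th] unfolding w_def by auto
        have phi0: "\<phi>0 x = (1 - w) *\<^sub>R nu x + w *\<^sub>R \<xi> k" unfolding \<phi>0_def w_def k_def ..
        have xcE: "x \<in> closure E" using xE EcE by blast
        have detG0: "det (augm (G x) (\<phi>0 x)) \<ge> \<delta>1"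
        proof -
          have "det (augm (G x) (\<phi>0 x)) = (1 - w) * norm (cr x) + w * det (augm (G x) (\<xi> k))"
            unfolding phi0 det_augm_comb detnu[OF xcE] ..
          moreover have "(1 - w) * \<delta>1 \<le> (1 - w) * norm (cr x)"
            using crpos[OF xcE] w01 unfolding \<delta>1_def by (intro mult_left_mono) auto
          moreover have "w * \<delta>1 \<le> w * det (augm (G x) (\<xi> k))"
            using detGxi w01 unfolding \<delta>1_def by (intro mult_left_mono) auto
          ultimately show ?thesis by (simp add: algebra_simps)
        qed
        have detA0: "det (augm (A x) (\<phi>0 x)) \<ge> \<delta>1/2"
        proof -
          have "det (augm (A x) (\<phi>0 x)) = det (\<Psi> x) * det (augm (G x) (\<phi>0 x))" unfolding A_def by (rule det_augm_mult)
          moreover have "(1/2) * \<delta>1 \<le> det (\<Psi> x) * det (augm (G x) (\<phi>0 x))"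
            using detPsi[OF xE] detG0 d1 by (intro mult_mono) auto
          ultimately show ?thesis by simp
        qed
        have n0: "norm (\<phi>0 x) \<le> R + 1"
        proof -
          have "norm (\<phi>0 x) \<le> norm ((1 - w) *\<^sub>R nu x) + norm (w *\<^sub>R \<xi> k)" unfolding phi0 by (rule norm_triangle_ineq)
          also have "\<dots> = (1 - w) * norm (nu x) + w * norm (\<xi> k)" using w01 by simp
          also have "\<dots> \<le> 1 * 1 + 1 * R" using w01 nu1[OF xcE] xiR R0
            by (intro add_mono mult_mono) auto
          finally show ?thesis by simp
        qed
        have dphi: "norm (\<phi>0 x - \<phi> x) < \<tau>" using \<phi>(2) xcE by blast
        have nphi: "norm (\<phi> x) \<le> R + 2"
        proof -
          have "norm (\<phi> x) \<le> norm (\<phi>0 x) + norm (\<phi> x - \<phi>0 x)" by (rule norm_triangle_sub)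
          then have "norm (\<phi> x) \<le> norm (\<phi>0 x) + norm (\<phi>0 x - \<phi> x)" by (simp add: norm_minus_commute)
          then show ?thesis using n0 dphi tau by linarith
        qed
        define F0 where "F0 = augm (A x) (\<phi>0 x)"
        define Fp where "Fp = augm (A x) (\<phi> x)"
        have nF0: "norm F0 \<le> Rb" using norm_augm_le[of "A x" "\<phi>0 x"] normA[OF xE] n0 unfolding F0_def Rb_def by linarith
        have nFp: "norm Fp \<le> Rb" using norm_augm_le[of "A x" "\<phi> x"] normA[OF xE] nphi unfolding Fp_def Rb_def by linarith
        have dF0p: "norm (F0 - Fp) < \<rho>b"
          using norm_augm_diffxi[of "A x" "\<phi>0 x" "\<phi> x"] dphi tau unfolding F0_def Fp_def by linarith
        have uFp: "det Fp \<ge> (\<delta>1/2)/2 \<and> \<bar>enn2real (W F0) - enn2real (W Fp)\<bar> < \<epsilon>1"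
          using \<rho>b(2) nF0 nFp detA0[folded F0_def] dF0p by blast
        have WFp: "W Fp \<le> ennreal Mbig" using Mbig(2)[of Fp] uFp nFp by simp
        have b1: "norm (\<phi> x) \<le> \<beta>" using nphi unfolding \<beta>_def by simp
        have b2: "det Fp \<ge> 1 / \<beta>"
        proof -
          have "4 / \<delta>1 \<le> \<beta>" unfolding \<beta>_def by simp
          then have "1 / \<beta> \<le> 1 / (4 / \<delta>1)" using d1 \<beta>0 by (intro divide_left_mono) auto
          also have "\<dots> = \<delta>1 / 4" by simp
          finally show ?thesis using uFp by simp
        qed
        have b3: "x \<notin> B1 n \<union> B2 m \<longrightarrow> W Fp \<le> W0 W (A x) + ennreal (4 * \<epsilon>1)"
        proof
          assume good: "x \<notin> B1 n \<union> B2 m"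
          have "\<exists>K\<in>T. ball x (2 * h) \<subseteq> K"
          proof (rule ccontr)
            assume "\<not> ?thesis"
            then have "infdist x Fr \<le> 2 * h" using bad_infdist[OF tri xE] unfolding Fr_def by blast
            then have "x \<in> B1 n" unfolding B1_def using xE h(3) by auto
            then show False using good by blast
          qed
          then obtain K where K: "K \<in> T" "ball x (2 * h) \<subseteq> K" by blast
          have bi: "ball x (2 * h) \<subseteq> interior K" using K(2) by (intro interior_maximal) auto
          have "x \<in> interior K" using bi h(1) by (meson centre_in_ball mult_pos_pos subsetD zero_less_numeral)
          then have Px: "\<Psi> x = c K" using Psi_on_int[OF tri c K(1) xE] by blast
          have "y \<in> interior K" using bi dxy2 by (auto simp: dist_commute)
          then have Py: "\<Psi> y = c K" using Psi_on_int[OF tri c K(1) y(1)] by blast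
          have PM: "\<Psi> x = M" using Px Py unfolding M_def by simp
          have Ax: "A x = G x ** M" unfolding A_def PM ..
          have s1: "\<bar>sin ((pi / h) * x$1)\<bar> \<ge> \<theta>" and s2: "\<bar>sin ((pi / h) * x$2)\<bar> \<ge> \<theta>"
            using good xE unfolding B2_def \<theta>_def by auto
          have w1: "w = 1" unfolding w_def using wt_one[OF th s1 s2] .
          have F0F': "F0 = F'" unfolding F0_def F'_def phi0 w1 Ax by simp
          have ca: "W Fp \<le> W F0 + ennreal \<epsilon>1"
            using W_close[OF hW _ _ conjunct2[OF uFp]] detA0 uFp d1 unfolding F0_def by auto
          have cb: "W F0 \<le> W Fy + ennreal \<epsilon>1"
            using W_close[OF hW _ _ conjunct2[OF uF']] dFy uF' d0 F0F' by auto
          have cc: "W Fy \<le> W0 W (A y) + ennreal \<epsilon>1" using xiprop unfolding Fy_def by simp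
          have cd: "W0 W (A y) \<le> W0 W (A x) + ennreal \<epsilon>1"
          proof (rule ennreal_le_epsilon)
            fix e :: real assume e: "0 < e"
            have finx: "W0 W (A x) \<noteq> \<infinity>" using W0A[OF xE] by (auto simp: top_unique)
            obtain \<zeta> where \<zeta>: "W (augm (A x) \<zeta>) < W0 W (A x) + ennreal e"
              using INF_approx_ennreal[OF e W0_def[of W "A x"] finx] by auto
            show "W0 W (A y) \<le> W0 W (A x) + ennreal \<epsilon>1 + ennreal e"
            proof (cases "W (augm (A x) \<zeta>) \<le> ennreal (M0+1)")
              case True
              have nz: "norm \<zeta> \<le> R" using Wii True by blast
              define Fz where "Fz = augm (A x) \<zeta>"
              define Fz' where "Fz' = augm (A y) \<zeta>"
              have nFz: "norm Fz \<le> Acap + R" using norm_augm_le[of "A x" \<zeta>] normA[OF xE] nz unfolding Fz_def by linarith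
              have nFz': "norm Fz' \<le> Acap + R" using norm_augm_le[of "A y" \<zeta>] normA[OF y(1)] nz unfolding Fz'_def by linarith
              have dFz: "det Fz \<ge> \<delta>" using Wiii[OF nFz] True unfolding Fz_def by simp
              have "norm (Fz - Fz') \<le> norm (G x ** M - G y ** M)" unfolding Fz_def Fz'_def Ax Ay by (rule norm_augm_diffA)
              also have "\<dots> < \<rho>a" using GM[OF xE y(1) dxy Mb] .
              finally have dz: "norm (Fz - Fz') < \<rho>a" .
              have uz: "det Fz' \<ge> \<delta>/2 \<and> \<bar>enn2real (W Fz) - enn2real (W Fz')\<bar> < \<epsilon>1"
              proof -
                have "norm Fz \<le> Rb" "norm Fz' \<le> Rb" using nFz nFz' RbA by linarith+
                then show ?thesis using \<rho>a(2) dFz dz by blast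
              qed
              have "W Fz' \<le> W Fz + ennreal \<epsilon>1"
                using W_close[OF hW _ _ conjunct2[OF uz]] dFz uz d0 by auto
              moreover have "W0 W (A y) \<le> W Fz'" unfolding W0_def Fz'_def by (rule INF_lower) simp
              moreover have "W Fz \<le> W0 W (A x) + ennreal e" using \<zeta> unfolding Fz_def by simp
              ultimately have "W0 W (A y) \<le> W0 W (A x) + ennreal e + ennreal \<epsilon>1"
                by (meson add_right_mono order_trans)
              then show ?thesis by (simp add: ac_simps)
            next
              case False
              have "W0 W (A y) \<le> ennreal (M0 + 1)" using W0A[OF y(1)] M0 by (meson ennreal_leI le_add_same_cancel1 order_trans zero_le_one)
              also have "\<dots> \<le> W (augm (A x) \<zeta>)" using False by simp
              also have "\<dots> \<le> W0 W (A x) + ennreal e" using \<zeta> by simp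
              also have "\<dots> \<le> W0 W (A x) + ennreal \<epsilon>1 + ennreal e" by (simp add: add_mono)
              finally show ?thesis .
            qed
          qed
          have "W Fp \<le> W0 W (A x) + ennreal \<epsilon>1 + ennreal \<epsilon>1 + ennreal \<epsilon>1 + ennreal \<epsilon>1"
            using ca cb cc cd by (meson add_right_mono order_trans)
          also have "\<dots> = W0 W (A x) + ennreal (4 * \<epsilon>1)"
          proof -
            have "ennreal \<epsilon>1 + ennreal \<epsilon>1 + ennreal \<epsilon>1 + ennreal \<epsilon>1 = ennreal (4 * \<epsilon>1)"
              using e1 by (simp add: ennreal_plus[symmetric] del: ennreal_plus)
            then show ?thesis by (simp add: ac_simps)
          qed
          finally show "W Fp \<le> W0 W (A x) + ennreal (4 * \<epsilon>1)" .
        qed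
        show ?thesis using b1 b2 b3 WFp unfolding Fp_def by blast
      qed
      define B where "B = B1 n \<union> B2 m"
      have Bleb: "B \<in> sets lebesgue" unfolding B_def using B1leb B2leb by auto
      have BsubE: "B \<subseteq> E" unfolding B_def B1_def B2_def by auto
      have Blm: "B \<in> lmeasurable" using bounded_subset[OF bE BsubE] Bleb bounded_set_imp_lmeasurable by blast
      define mB where "mB = measure lebesgue B"
      have mB0: "mB \<ge> 0" unfolding mB_def by simp
      have mBle: "mB \<le> measure lebesgue (B1 n) + measure lebesgue (B2 m)" unfolding mB_def B_def
        by (rule measure_Un_le[OF B1leb B2leb])
      have MmB: "Mbig * mB \<le> \<epsilon> / 2"
      proof -
        have "mB \<le> \<epsilon> / (2 * Mbig)" using mBle n m by (simp add: field_simps)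
        then have "Mbig * mB \<le> Mbig * (\<epsilon> / (2 * Mbig))" using Mbig(1) by (intro mult_left_mono) auto
        also have "\<dots> = \<epsilon> / 2" using Mbig(1) by simp
        finally show ?thesis .
      qed
      define g where "g x = ennreal (4 * \<epsilon>1) * indicator E x + ennreal Mbig * indicator B x" for x
      have Eleb': "E \<in> sets lebesgue" using Eleb by (simp add: fmeasurable_def)
      have gm: "g \<in> borel_measurable lebesgue" unfolding g_def
        using Eleb' Bleb by (intro borel_measurable_add borel_measurable_times borel_measurable_const borel_measurable_indicator) auto
      have eE: "emeasure lebesgue E = ennreal mE" unfolding mE_def using emeasure_eq_measure2[OF Eleb] .
      have eB: "emeasure lebesgue B = ennreal mB" unfolding mB_def using emeasure_eq_measure2[OF Blm] .
      have intg: "(\<integral>\<^sup>+x. g x \<partial>lebesgue) \<le> ennreal \<epsilon>"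
      proof -
        have "(\<integral>\<^sup>+x. g x \<partial>lebesgue) = (\<integral>\<^sup>+x. ennreal (4 * \<epsilon>1) * indicator E x \<partial>lebesgue) + (\<integral>\<^sup>+x. ennreal Mbig * indicator B x \<partial>lebesgue)"
          unfolding g_def using Eleb' Bleb by (intro nn_integral_add) auto
        also have "\<dots> = ennreal (4 * \<epsilon>1) * ennreal mE + ennreal Mbig * ennreal mB"
          using Eleb' Bleb by (simp add: nn_integral_cmult_indicator eE eB)
        also have "\<dots> = ennreal (4 * \<epsilon>1 * mE + Mbig * mB)"
          using e1 mE0 Mbig(1) mB0 by (simp add: ennreal_mult[symmetric] ennreal_plus[symmetric] del: ennreal_plus)
        also have "\<dots> \<le> ennreal \<epsilon>" using e1mE MmB by (intro ennreal_leI) linarith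
        finally show ?thesis .
      qed
      have ptw: "W (augm (A x) (\<phi> x)) * indicator E x \<le> W0 W (A x) * indicator E x + g x" for x
      proof (cases "x \<in> E")
        case True
        note P = pt[OF True]
        show ?thesis
        proof (cases "x \<in> B")
          case True2: True
          have "W (augm (A x) (\<phi> x)) \<le> ennreal Mbig" using P by blast
          also have "\<dots> \<le> W0 W (A x) + (ennreal (4 * \<epsilon>1) + ennreal Mbig)" by (simp add: add_increasing)
          finally show ?thesis unfolding g_def using True True2 by simp
        next
          case False
          then have "W (augm (A x) (\<phi> x)) \<le> W0 W (A x) + ennreal (4 * \<epsilon>1)" using P unfolding B_def by blast
          then show ?thesis unfolding g_def using True False by simp
        qed
      next
        case False
        then show ?thesis unfolding g_def by simp
      qed
      have "(\<integral>\<^sup>+x. W (augm (A x) (\<phi> x)) * indicator E x \<partial>lebesgue) \<le> (\<integral>\<^sup>+x. W0 W (A x) * indicator E x + g x \<partial>lebesgue)"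
        by (intro nn_integral_mono ptw)
      also have "\<dots> \<le> (\<integral>\<^sup>+x. W0 W (A x) * indicator E x \<partial>lebesgue) + (\<integral>\<^sup>+x. g x \<partial>lebesgue)"
        by (rule nn_integral_subadd[OF gm])
      also have "\<dots> \<le> (\<integral>\<^sup>+x. W0 W (A x) * indicator E x \<partial>lebesgue) + ennreal \<epsilon>"
        using intg by (rule add_left_mono)
      finally have INT: "(\<integral>\<^sup>+x. W (augm (A x) (\<phi> x)) * indicator E x \<partial>lebesgue) \<le> (\<integral>\<^sup>+x. W0 W (A x) * indicator E x \<partial>lebesgue) + ennreal \<epsilon>" .
      show ?thesis
      proof (intro exI[of _ \<phi>] conjI ballI)
        show "C_inf \<phi>" using poly_C_inf[OF \<phi>(1)] .
        show "norm (\<phi> x) \<le> \<beta>" if "x \<in> E" for x using pt[OF that] by blast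
        show "1 / \<beta> \<le> det (augm (G x ** \<Psi> x) (\<phi> x))" if "x \<in> E" for x using pt[OF that] unfolding A_def by blast
        show "(\<integral>\<^sup>+x\<in>E. W (augm (G x ** \<Psi> x) (\<phi> x)) \<partial>lebesgue) \<le> (\<integral>\<^sup>+x\<in>E. W0 W (G x ** \<Psi> x) \<partial>lebesgue) + ennreal \<epsilon>"
          using INT unfolding A_def .
      qed
    qed
  qed
qed

theorem lemma4p10:
  fixes p :: real and W :: "real^3^3 \<Rightarrow> ennreal"
  assumes "1 < p" and "hyps_W p W"
  shows "\<exists>\<beta> :: real \<Rightarrow> real \<Rightarrow> real \<Rightarrow> real. (\<forall>\<eta> a b. \<beta> \<eta> a b > 0) \<and>
    (\<forall>(E :: (real^2) set) (\<eta>::real) (G :: real^2 \<Rightarrow> real^2^3) (\<epsilon>::real) T (\<Psi> :: real^2 \<Rightarrow> real^2^2).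
       open E \<and> bounded E \<and> \<eta> > 0 \<and> continuous_on (closure E) G \<and>
       (\<forall>x\<in>closure E. norm (cross3 (column 1 (G x)) (column 2 (G x))) \<ge> \<eta>) \<and>
       0 < \<epsilon> \<and> \<epsilon> < 1/2 \<and> triangulation T E \<and> pw_const T E \<Psi> \<and>
       (\<forall>x\<in>E. \<bar>det (\<Psi> x) - 1\<bar> \<le> \<epsilon>)
     \<longrightarrow> (let \<beta>0 = \<beta> \<eta> (SUP x\<in>E. norm (G x)) (SUP x\<in>E. norm (\<Psi> x)) in
          \<exists>\<phi> :: real^2 \<Rightarrow> real^3. C_inf \<phi> \<and>
            (\<forall>x\<in>E. norm (\<phi> x) \<le> \<beta>0) \<and>
            (\<forall>x\<in>E. det (augm (G x ** \<Psi> x) (\<phi> x)) \<ge> 1 / \<beta>0) \<and>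
            (\<integral>\<^sup>+ x\<in>E. W (augm (G x ** \<Psi> x) (\<phi> x)) \<partial>lebesgue)
              \<le> (\<integral>\<^sup>+ x\<in>E. W0 W (G x ** \<Psi> x) \<partial>lebesgue) + ennreal \<epsilon>))"
proof -
  let ?H = "\<lambda>\<eta> a b (E :: (real^2) set) (G :: real^2 \<Rightarrow> real^2^3) (\<epsilon>::real) T (\<Psi> :: real^2 \<Rightarrow> real^2^2).
       open E \<and> bounded E \<and> continuous_on (closure E) G \<and>
       (\<forall>x\<in>closure E. norm (cross3 (column 1 (G x)) (column 2 (G x))) \<ge> \<eta>) \<and>
       0 < \<epsilon> \<and> \<epsilon> < 1/2 \<and> triangulation T E \<and> pw_const T E \<Psi> \<and>
       (\<forall>x\<in>E. \<bar>det (\<Psi> x) - 1\<bar> \<le> \<epsilon>) \<and> (\<forall>x\<in>E. norm (G x) \<le> a) \<and> (\<forall>x\<in>E. norm (\<Psi> x) \<le> b)"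
  let ?C = "\<lambda>\<beta> (E :: (real^2) set) (G :: real^2 \<Rightarrow> real^2^3) (\<epsilon>::real) (\<Psi> :: real^2 \<Rightarrow> real^2^2).
       \<exists>\<phi> :: real^2 \<Rightarrow> real^3. C_inf \<phi> \<and> (\<forall>x\<in>E. norm (\<phi> x) \<le> \<beta>) \<and>
            (\<forall>x\<in>E. det (augm (G x ** \<Psi> x) (\<phi> x)) \<ge> 1 / \<beta>) \<and>
            (\<integral>\<^sup>+ x\<in>E. W (augm (G x ** \<Psi> x) (\<phi> x)) \<partial>lebesgue)
              \<le> (\<integral>\<^sup>+ x\<in>E. W0 W (G x ** \<Psi> x) \<partial>lebesgue) + ennreal \<epsilon>"
  define P where "P \<eta> a b \<beta> \<longleftrightarrow> \<beta> > 0 \<and> (\<eta> > 0 \<longrightarrow> (\<forall>E G \<epsilon> T \<Psi>. ?H \<eta> (max a 0) (max b 0) E G \<epsilon> T \<Psi> \<longrightarrow> ?C \<beta> E G \<epsilon> \<Psi>))" for \<eta> a b \<beta>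
  have exP: "\<exists>\<beta>. P \<eta> a b \<beta>" for \<eta> a b
  proof (cases "\<eta> > 0")
    case True
    from main_fixed[OF assms True, of "max a 0" "max b 0"] obtain \<beta> where "\<beta> > 0"
      "\<forall>E G \<epsilon> T \<Psi>. ?H \<eta> (max a 0) (max b 0) E G \<epsilon> T \<Psi> \<longrightarrow> ?C \<beta> E G \<epsilon> \<Psi>" by auto
    then show ?thesis unfolding P_def by blast
  next
    case False
    then show ?thesis unfolding P_def by (intro exI[of _ 1]) simp
  qed
  define \<beta> where "\<beta> \<eta> a b = (SOME \<beta>. P \<eta> a b \<beta>)" for \<eta> a b
  have P\<beta>: "P \<eta> a b (\<beta> \<eta> a b)" for \<eta> a b unfolding \<beta>_def by (rule someI_ex[OF exP])
  show ?thesis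
  proof (intro exI[of _ \<beta>] conjI allI impI)
    show "\<beta> \<eta> a b > 0" for \<eta> a b using P\<beta>[of \<eta> a b] unfolding P_def by blast
    fix E :: "(real^2) set" and \<eta> :: real and G :: "real^2 \<Rightarrow> real^2^3" and \<epsilon> :: real and T and \<Psi> :: "real^2 \<Rightarrow> real^2^2"
    assume H: "open E \<and> bounded E \<and> \<eta> > 0 \<and> continuous_on (closure E) G \<and>
       (\<forall>x\<in>closure E. norm (cross3 (column 1 (G x)) (column 2 (G x))) \<ge> \<eta>) \<and>
       0 < \<epsilon> \<and> \<epsilon> < 1/2 \<and> triangulation T E \<and> pw_const T E \<Psi> \<and>
       (\<forall>x\<in>E. \<bar>det (\<Psi> x) - 1\<bar> \<le> \<epsilon>)"
    define a0 where "a0 = (SUP x\<in>E. norm (G x))"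
    define b0 where "b0 = (SUP x\<in>E. norm (\<Psi> x))"
    have bG: "bounded (G ` closure E)"
      using H by (intro compact_imp_bounded compact_continuous_image) auto
    then obtain BG where BG: "\<And>y. y \<in> G ` closure E \<Longrightarrow> norm y \<le> BG" unfolding bounded_iff by blast
    have bddG: "bdd_above ((\<lambda>x. norm (G x)) ` E)"
      using BG closure_subset by (intro bdd_aboveI2[of _ _ BG]) blast
    have Ga: "\<forall>x\<in>E. norm (G x) \<le> max a0 0"
      unfolding a0_def using cSUP_upper[OF _ bddG] by (meson max.coboundedI1)
    obtain c where c: "\<forall>x\<in>E. \<exists>K\<in>T. x \<in> K \<and> \<Psi> x = c K" using H unfolding pw_const_def by blast
    have finT: "finite T" using H unfolding triangulation_def by blast
    have bddP: "bdd_above ((\<lambda>x. norm (\<Psi> x)) ` E)"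
    proof (rule bdd_aboveI2[of _ _ "Max ((\<lambda>K. norm (c K)) ` T)"])
      fix x assume "x \<in> E"
      then obtain K where "K \<in> T" "\<Psi> x = c K" using c by blast
      then show "norm (\<Psi> x) \<le> Max ((\<lambda>K. norm (c K)) ` T)" using finT by (auto intro: Max_ge)
    qed
    have Pb: "\<forall>x\<in>E. norm (\<Psi> x) \<le> max b0 0"
      unfolding b0_def using cSUP_upper[OF _ bddP] by (meson max.coboundedI1)
    have "?H \<eta> (max a0 0) (max b0 0) E G \<epsilon> T \<Psi>" using H Ga Pb by blast
    moreover have "\<eta> > 0" using H by blast
    ultimately have "?C (\<beta> \<eta> a0 b0) E G \<epsilon> \<Psi>" using P\<beta>[of \<eta> a0 b0] unfolding P_def by blast
    then show "let \<beta>0 = \<beta> \<eta> (SUP x\<in>E. norm (G x)) (SUP x\<in>E. norm (\<Psi> x)) in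
          \<exists>\<phi> :: real^2 \<Rightarrow> real^3. C_inf \<phi> \<and>
            (\<forall>x\<in>E. norm (\<phi> x) \<le> \<beta>0) \<and>
            (\<forall>x\<in>E. det (augm (G x ** \<Psi> x) (\<phi> x)) \<ge> 1 / \<beta>0) \<and>
            (\<integral>\<^sup>+ x\<in>E. W (augm (G x ** \<Psi> x) (\<phi> x)) \<partial>lebesgue)
              \<le> (\<integral>\<^sup>+ x\<in>E. W0 W (G x ** \<Psi> x) \<partial>lebesgue) + ennreal \<epsilon>"
      unfolding Let_def a0_def b0_def .
  qed
qed


end
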